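(* For every $r\in(0,1)$, $$F(r)=Q\left(\frac{G(|\cdot|,r)}{G(r,r)}\right),$$ where $Q(u)=\int_{B_1}\left(|\nabla u|^2+V(|x|)u^2\right)dx$ and $\frac{G(|\cdot|,r)}{G(r,r)}$ denotes the function $x\mapsto G(|x|,r)/G(r,r)$ on $B_1$.
   Context: Let $n\ge2$, let $B_1\subset\mathbb{R}^n$ be the open unit ball, $|\partial B_1|$ the $(n-1)$-dimensional measure of the unit sphere, and $V(|x|)\ge0$, $V\not\equiv0$, a smooth radial function on $B_1$. For $s\in(0,1)$, $G(\cdot,s)$ is the Green function of the radial operator $\mathcal{L}u=-u''-\frac{n-1}{r}u'+V(r)u$ on $(0,1)$ with boundary conditions $u'(0)=0$ and $u'(1)=0$: that is, $-\partial_r^2G(r,s)-\frac{n-1}{r}\partial_rG(r,s)+V(r)G(r,s)=\delta_s$ in the sense of distributions on $(0,1)$ (Dirac mass with respect to $dr$), with $\partial_rG(0,s)=0$ and $\partial_rG(1,s)=0$. Define $F(r)=\frac{|\partial B_1|\,r^{n-1}}{G(r,r)}$. *)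

theory Defs
  imports "HOL-Analysis.Analysis"
begin

text \<open>C-infinity on a set S (intended for open S): all iterated partial derivatives exist
  everywhere on S; D vs is the iterated partial derivative along the basis vectors in vs.\<close>
definition smooth_on :: "'a::euclidean_space set \<Rightarrow> ('a \<Rightarrow> real) \<Rightarrow> bool" where
  "smooth_on S f \<longleftrightarrow> (\<exists>D :: 'a list \<Rightarrow> 'a \<Rightarrow> real. D [] = f \<and>
     (\<forall>vs. \<forall>x\<in>S. (D vs has_derivative (\<lambda>h. \<Sum>b\<in>Basis. (h \<bullet> b) * D (b # vs) x)) (at x)))"

text \<open>g is the Green function G(.,s) of  -u'' - (n-1)/r u' + V u = delta_s  on (0,1) with
  Neumann conditions u'(0) = 0, u'(1) = 0: g is continuous on [0,1], C^1 on [0,1] minus {s}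
  (one-sided at the endpoints), solves the homogeneous ODE classically on (0,s) and (s,1),
  and its derivative jumps by -1 at s (g'(s-) - g'(s+) = 1), which is exactly the
  distributional equation with Dirac mass at s.\<close>
definition radial_green :: "nat \<Rightarrow> (real \<Rightarrow> real) \<Rightarrow> real \<Rightarrow> (real \<Rightarrow> real) \<Rightarrow> bool" where
  "radial_green n V s g \<longleftrightarrow> (\<exists>g' a b.
     continuous_on {0..1} g \<and>
     (\<forall>r\<in>{0..1} - {s}. (g has_real_derivative g' r) (at r within {0..1})) \<and>
     (\<forall>r\<in>{0<..<1} - {s}.
        (g' has_real_derivative (V r * g r - (real n - 1) / r * g' r)) (at r)) \<and>
     g' 0 = 0 \<and> g' 1 = 0 \<and>
     (g' \<longlongrightarrow> a) (at_left s) \<and> (g' \<longlongrightarrow> b) (at_right s) \<and> a - b = 1)"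

definition grad :: "('a::euclidean_space \<Rightarrow> real) \<Rightarrow> 'a \<Rightarrow> 'a" where
  "grad u x = (\<Sum>b\<in>Basis. frechet_derivative u (at x) b *\<^sub>R b)"

definition Qform :: "(real \<Rightarrow> real) \<Rightarrow> ('a::euclidean_space \<Rightarrow> real) \<Rightarrow> real" where
  "Qform V u = integral (ball 0 1) (\<lambda>x. (norm (grad u x))\<^sup>2 + V (norm x) * (u x)\<^sup>2)"

text \<open>|\<partial>B_1| = n |B_1| (surface measure of the unit sphere in R^n).\<close>
definition sphere_area :: "'a::euclidean_space itself \<Rightarrow> real" where
  "sphere_area TYPE('a) = real DIM('a) * measure lborel (ball (0::'a) 1)"

definition Ffun :: "'a::euclidean_space itself \<Rightarrow> (real \<Rightarrow> real \<Rightarrow> real) \<Rightarrow> real \<Rightarrow> real" where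
  "Ffun T G r = sphere_area T * r ^ (DIM('a) - 1) / G r r"

end

theory Submission
  imports Defs
begin
lemma radial_tail:
  fixes \<alpha> :: real and n :: nat and w :: real
  assumes "0 \<le> \<alpha>" "\<alpha> \<le> 1" "n \<ge> 1" "w \<ge> 0"
  shows "(\<integral>\<^sup>+\<rho>. indicator {\<alpha><..<1} \<rho> * ennreal (real n * w * \<rho> ^ (n - 1)) \<partial>lborel)
         = ennreal (w - w * \<alpha> ^ n)"
proof -
  have "(\<integral>\<^sup>+\<rho>. indicator {\<alpha><..<1} \<rho> * ennreal (real n * w * \<rho> ^ (n - 1)) \<partial>lborel)
      = (\<integral>\<^sup>+\<rho>. ennreal (real n * w * \<rho> ^ (n - 1)) * indicator {\<alpha>..1} \<rho> \<partial>lborel)"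
  proof (rule nn_integral_cong_AE)
    show "AE x in lborel. indicator {\<alpha><..<1} x * ennreal (real n * w * x ^ (n - 1)) =
        ennreal (real n * w * x ^ (n - 1)) * indicator {\<alpha>..1} x"
      using AE_lborel_singleton[of \<alpha>] AE_lborel_singleton[of 1]
      by eventually_elim (auto simp: indicator_def)
  qed
  also have "\<dots> = ennreal (w * 1 ^ n - w * \<alpha> ^ n)"
  proof (rule nn_integral_FTC_Icc[where F="\<lambda>x. w * x ^ n"])
    show "(\<lambda>x. real n * w * x ^ (n - 1)) \<in> borel_measurable borel" by measurable
    fix x assume x: "x \<in> {\<alpha>..1}"
    show "((\<lambda>x. w * x ^ n) has_real_derivative real n * w * x ^ (n - 1)) (at x)"
      by (auto intro!: derivative_eq_intros)
    show "0 \<le> real n * w * x ^ (n - 1)" using x assms by auto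
  qed (use assms in auto)
  also have "\<dots> = ennreal (w - w * \<alpha> ^ n)" by simp
  finally show ?thesis .
qed

lemma radial_distr:
  fixes n :: nat and w :: real
  assumes nd: "n = DIM('a::euclidean_space)" and wd: "w = unit_ball_vol (real n)"
  shows "distr (density lborel (indicator (ball (0::'a) 1))) borel norm
       = density lborel (\<lambda>\<rho>. indicator {0<..<1} \<rho> * ennreal (real n * w * \<rho> ^ (n - 1)))"
proof (rule measure_eqI_lessThan)
  have n1: "n \<ge> 1" using nd by (simp add: DIM_positive Suc_leI)
  have w0: "w \<ge> 0" using wd by simp
  have im: "(indicator (ball (0::'a) 1) :: 'a \<Rightarrow> ennreal) \<in> borel_measurable borel"
    by (rule borel_measurable_indicator) auto
  have nm: "norm -` {t<..} \<in> sets (borel :: 'a measure)" for t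
    by (simp add: open_vimage continuous_on_norm_id)
  have L: "emeasure (distr (density lborel (indicator (ball (0::'a) 1))) borel norm) {t<..}
        = ennreal (if t < 0 then w else if t < 1 then w - w * t ^ n else 0)" for t
  proof -
    have "emeasure (distr (density lborel (indicator (ball (0::'a) 1))) borel norm) {t<..}
        = emeasure (density lborel (indicator (ball (0::'a) 1))) (norm -` {t<..})"
      by (subst emeasure_distr) auto
    also have "\<dots> = (\<integral>\<^sup>+x. indicator (ball (0::'a) 1) x * indicator (norm -` {t<..}) x \<partial>lborel)"
      using im nm by (subst emeasure_density) auto
    also have "\<dots> = (\<integral>\<^sup>+x. indicator (ball (0::'a) 1 - cball 0 t) x \<partial>lborel)"
      by (intro nn_integral_cong) (auto simp: indicator_def)
    also have "\<dots> = emeasure lborel (ball (0::'a) 1 - cball 0 t)"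
      by (intro nn_integral_indicator) auto
    also have "\<dots> = emeasure lborel (ball (0::'a) 1 \<inter> {x. t < norm x})"
      by (rule arg_cong[where f="emeasure lborel"]) auto
    also have "\<dots> = ennreal (if t < 0 then w else if t < 1 then w - w * t ^ n else 0)"
    proof (cases "t < 0")
      case True
      then have "ball (0::'a) 1 \<inter> {x. t < norm x} = ball 0 1" using norm_ge_zero by (auto intro: less_le_trans)
      then show ?thesis using True by (simp add: emeasure_ball nd wd)
    next
      case False
      show ?thesis
      proof (cases "t < 1")
        case True
        then have "ball (0::'a) 1 \<inter> {x. t < norm x} = ball 0 1 - cball 0 t" by auto
        moreover have "emeasure lborel (ball (0::'a) 1 - cball 0 t)
            = emeasure lborel (ball (0::'a) 1) - emeasure lborel (cball (0::'a) t)"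
          using True False by (intro emeasure_Diff) (auto simp: emeasure_cball)
        ultimately show ?thesis using True False w0
          by (simp add: emeasure_ball emeasure_cball nd wd ennreal_minus mult.commute)
      next
        case False2: False
        then have "ball (0::'a) 1 \<inter> {x. t < norm x} = {}" by auto
        then show ?thesis using False False2 by simp
      qed
    qed
    finally show ?thesis .
  qed
  have R: "emeasure (density lborel (\<lambda>\<rho>. indicator {0<..<1} \<rho> * ennreal (real n * w * \<rho> ^ (n - 1)))) {t<..}
        = ennreal (if t < 0 then w else if t < 1 then w - w * t ^ n else 0)" for t
  proof -
    have "emeasure (density lborel (\<lambda>\<rho>. indicator {0<..<1} \<rho> * ennreal (real n * w * \<rho> ^ (n - 1)))) {t<..}
      = (\<integral>\<^sup>+\<rho>. indicator {max 0 t<..<1} \<rho> * ennreal (real n * w * \<rho> ^ (n - 1)) \<partial>lborel)"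
      by (subst emeasure_density) (auto intro!: nn_integral_cong simp: indicator_def)
    also have "\<dots> = ennreal (if t < 0 then w else if t < 1 then w - w * t ^ n else 0)"
    proof (cases "t < 0")
      case True
      then show ?thesis using radial_tail[of 0 n w] n1 w0 by (simp add: max_def power_0_left)
    next
      case False
      show ?thesis
      proof (cases "t < 1")
        case True
        then show ?thesis using radial_tail[of t n w] n1 w0 False by (simp add: max_def)
      next
        case False2: False
        then have "{max 0 t<..<1} = {}" by auto
        then show ?thesis using False False2 by simp
      qed
    qed
    finally show ?thesis .
  qed
  show "emeasure (distr (density lborel (indicator (ball (0::'a) 1))) borel norm) {x<..} < \<infinity>" for x
    by (simp add: L)
  show "emeasure (distr (density lborel (indicator (ball (0::'a) 1))) borel norm) {x<..} =
    emeasure (density lborel (\<lambda>\<rho>. indicator {0<..<1} \<rho> * ennreal (real n * w * \<rho> ^ (n - 1)))) {x<..}" for x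
    by (simp only: L R)
qed auto

lemma radial_integral:
  fixes F :: "real \<Rightarrow> ennreal"
  assumes Fm: "F \<in> borel_measurable borel"
  shows "(\<integral>\<^sup>+x. indicator (ball (0::'a::euclidean_space) 1) x * F (norm x) \<partial>lborel)
     = (\<integral>\<^sup>+\<rho>. indicator {0<..<1} \<rho> * ennreal (real DIM('a) * unit_ball_vol (real DIM('a)) * \<rho> ^ (DIM('a) - 1)) * F \<rho> \<partial>lborel)"
proof -
  have im: "(indicator (ball (0::'a) 1) :: 'a \<Rightarrow> ennreal) \<in> borel_measurable borel"
    by (rule borel_measurable_indicator) auto
  have "(\<integral>\<^sup>+x. indicator (ball (0::'a) 1) x * F (norm x) \<partial>lborel)
      = (\<integral>\<^sup>+x. F (norm x) \<partial>(density lborel (indicator (ball (0::'a) 1))))"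
    using Fm im by (subst nn_integral_density) auto
  also have "\<dots> = (\<integral>\<^sup>+\<rho>. F \<rho> \<partial>(distr (density lborel (indicator (ball (0::'a) 1))) borel norm))"
    using Fm by (subst nn_integral_distr) auto
  also have "\<dots> = (\<integral>\<^sup>+\<rho>. F \<rho> \<partial>(density lborel (\<lambda>\<rho>. indicator {0<..<1} \<rho> * ennreal (real DIM('a) * unit_ball_vol (real DIM('a)) * \<rho> ^ (DIM('a) - 1)))))"
    by (subst radial_distr[OF refl refl]) simp
  also have "\<dots> = (\<integral>\<^sup>+\<rho>. indicator {0<..<1} \<rho> * ennreal (real DIM('a) * unit_ball_vol (real DIM('a)) * \<rho> ^ (DIM('a) - 1)) * F \<rho> \<partial>lborel)"
    using Fm by (subst nn_integral_density) auto
  finally show ?thesis .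
qed

lemma mvt_lower:
  fixes q w :: "real \<Rightarrow> real"
  assumes "a < b" "continuous_on {a..b} q"
    and d: "\<And>x. a < x \<Longrightarrow> x < b \<Longrightarrow> (q has_real_derivative w x) (at x)"
    and e: "\<And>x. a < x \<Longrightarrow> x < b \<Longrightarrow> w x \<ge> e"
  shows "q b - q a \<ge> (b - a) * e"
proof -
  obtain l z where z: "a < z" "z < b" "DERIV q z :> l" "q b - q a = (b - a) * l"
    using MVT[OF assms(1,2)] d real_differentiable_def by blast
  have "l = w z" using DERIV_unique[OF z(3) d[OF z(1,2)]] .
  then show ?thesis using z e[OF z(1,2)] assms(1) by (simp add: mult_left_mono)
qed

lemma endpoint_left:
  fixes q w :: "real \<Rightarrow> real"
  assumes t: "0 < t" and c: "continuous_on {0..t} q"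
    and d0: "(q has_real_derivative 0) (at 0 within {0..t})"
    and d: "\<And>x. 0 < x \<Longrightarrow> x < t \<Longrightarrow> (q has_real_derivative w x) (at x)"
    and e: "e > 0" and we: "\<And>x. 0 < x \<Longrightarrow> x < t \<Longrightarrow> w x \<ge> e"
  shows False
proof -
  have "((\<lambda>y. (q y - q 0) / (y - 0)) \<longlongrightarrow> 0) (at 0 within {0..t})"
    using d0 by (simp add: has_field_derivative_iff)
  then have "eventually (\<lambda>y. (q y - q 0) / (y - 0) < e) (at 0 within {0..t})"
    using e by (rule order_tendstoD)
  then obtain dd where dd: "dd > 0" "\<And>y. y \<in> {0..t} \<Longrightarrow> y \<noteq> 0 \<Longrightarrow> dist y 0 < dd \<Longrightarrow> (q y - q 0) / (y - 0) < e"
    unfolding eventually_at by blast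
  define y where "y = min t (dd/2)"
  have y: "0 < y" "y \<le> t" "y < dd" using t dd by (auto simp: y_def)
  have "q y - q 0 \<ge> (y - 0) * e"
    by (rule mvt_lower[where w=w]) (use y c d we in \<open>auto intro: continuous_on_subset\<close>)
  moreover have "(q y - q 0) / (y - 0) < e" using dd(2)[of y] y by auto
  ultimately show False using y by (simp add: field_simps)
qed

lemma endpoint_right:
  fixes q w :: "real \<Rightarrow> real"
  assumes t: "t < 1" and c: "continuous_on {t..1} q"
    and d0: "(q has_real_derivative 0) (at 1 within {t..1})"
    and d: "\<And>x. t < x \<Longrightarrow> x < 1 \<Longrightarrow> (q has_real_derivative w x) (at x)"
    and e: "e > 0" and we: "\<And>x. t < x \<Longrightarrow> x < 1 \<Longrightarrow> w x \<ge> e"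
  shows False
proof -
  have "((\<lambda>y. (q y - q 1) / (y - 1)) \<longlongrightarrow> 0) (at 1 within {t..1})"
    using d0 by (simp add: has_field_derivative_iff)
  then have "eventually (\<lambda>y. (q y - q 1) / (y - 1) < e) (at 1 within {t..1})"
    using e by (rule order_tendstoD)
  then obtain dd where dd: "dd > 0" "\<And>y. y \<in> {t..1} \<Longrightarrow> y \<noteq> 1 \<Longrightarrow> dist y 1 < dd \<Longrightarrow> (q y - q 1) / (y - 1) < e"
    unfolding eventually_at by blast
  define y where "y = max t (1 - dd/2)"
  have y: "y < 1" "t \<le> y" "1 - y < dd" using t dd by (auto simp: y_def)
  have "q 1 - q y \<ge> (1 - y) * e"
    by (rule mvt_lower[where w=w]) (use y c d we in \<open>auto intro: continuous_on_subset\<close>)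
  moreover have "(q y - q 1) / (y - 1) < e" using dd(2)[of y] y by (auto simp: dist_real_def)
  moreover have "(q y - q 1) / (y - 1) = (q 1 - q y) / (1 - y)" by (metis minus_diff_eq minus_divide_divide)
  ultimately show False using y by (simp add: field_simps)
qed

lemma phi_deriv:
  fixes g g' V :: "real \<Rightarrow> real" and n :: nat
  assumes n2: "n \<ge> 2" and x: "x > 0"
    and gD: "(g has_real_derivative g' x) (at x)"
    and g'D: "(g' has_real_derivative (V x * g x - (real n - 1) / x * g' x)) (at x)"
  shows "((\<lambda>x. x ^ (n - 1) * g x * g' x) has_real_derivative
            x ^ (n - 1) * ((g' x)\<^sup>2 + V x * (g x)\<^sup>2)) (at x)"
proof -
  obtain m where m: "n = Suc (Suc m)" using n2 by (metis add_2_eq_Suc le_Suc_ex)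
  have A: "((\<lambda>x. x ^ (n - 1)) has_real_derivative real (n - 1) * x ^ (n - 1 - 1)) (at x)"
    using DERIV_pow[of "n - 1" x] by simp
  have D: "((\<lambda>x. x ^ (n - 1) * g x * g' x) has_real_derivative
     (real (n - 1) * x ^ (n - 1 - 1) * g x + g' x * x ^ (n - 1)) * g' x
       + (V x * g x - (real n - 1) / x * g' x) * (x ^ (n - 1) * g x)) (at x)"
    using DERIV_mult[OF DERIV_mult[OF A gD] g'D] .
  show ?thesis
  proof (rule DERIV_cong[OF D])
    show "(real (n - 1) * x ^ (n - 1 - 1) * g x + g' x * x ^ (n - 1)) * g' x
       + (V x * g x - (real n - 1) / x * g' x) * (x ^ (n - 1) * g x)
     = x ^ (n - 1) * ((g' x)\<^sup>2 + V x * (g x)\<^sup>2)"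
      using x by (simp add: m field_simps power2_eq_square)
  qed
qed

lemma FTC_nn:
  fixes f F :: "real \<Rightarrow> real" and a b A B :: real
  assumes ab: "a < b"
    and F: "\<And>x. a < x \<Longrightarrow> x < b \<Longrightarrow> (F has_real_derivative f x) (at x)"
    and fc: "\<And>x. a < x \<Longrightarrow> x < b \<Longrightarrow> isCont f x"
    and f0: "\<And>x. a < x \<Longrightarrow> x < b \<Longrightarrow> 0 \<le> f x"
    and A: "(F \<longlongrightarrow> A) (at_right a)" and B: "(F \<longlongrightarrow> B) (at_left b)"
  shows "(\<integral>\<^sup>+x. ennreal (indicator {a<..<b} x * f x) \<partial>lborel) = ennreal (B - A) \<and> B - A \<ge> 0"
proof -
  have I: "set_integrable lborel (einterval (ereal a) (ereal b)) f"
      "(LBINT x=ereal a..ereal b. f x) = B - A"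
    by (rule interval_integral_FTC_nonneg[where F=F]; (use assms in \<open>auto simp: ereal_tendsto_simps1\<close>))+
  have int: "integrable lborel (\<lambda>x. indicator {a<..<b} x * f x)"
    using I(1) by (simp add: set_integrable_def)
  have "(LBINT x=ereal a..ereal b. f x) = integral\<^sup>L lborel (\<lambda>x. indicator {a<..<b} x * f x)"
    using ab by (simp add: interval_lebesgue_integral_def set_lebesgue_integral_def)
  then have "integral\<^sup>L lborel (\<lambda>x. indicator {a<..<b} x * f x) = B - A" using I(2) by simp
  moreover have "(\<integral>\<^sup>+x. ennreal (indicator {a<..<b} x * f x) \<partial>lborel)
      = ennreal (integral\<^sup>L lborel (\<lambda>x. indicator {a<..<b} x * f x))"
    by (rule nn_integral_eq_integral[OF int]) (auto simp: indicator_def f0)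
  moreover have "0 \<le> integral\<^sup>L lborel (\<lambda>x. indicator {a<..<b} x * f x)"
    by (rule Bochner_Integration.integral_nonneg) (auto simp: indicator_def f0)
  ultimately show ?thesis by simp
qed

lemma div_le_aux1:
  assumes "0 < (p::real)" "p \<le> 1" "c > 0" "p * y \<ge> c" shows "y \<ge> c"
proof -
  have "y > 0" using assms by (metis less_le_trans zero_less_mult_pos)
  then have "p * y \<le> y" using assms by (simp add: mult_left_le_one_le)
  then show ?thesis using assms by linarith
qed
lemma div_le_aux2:
  assumes "0 < (p::real)" "p \<le> 1" "c < 0" "p * y \<le> c" shows "-y \<ge> -c"
proof -
  have "p * (-y) \<ge> -c" using assms by simp
  then show ?thesis using div_le_aux1[of p "-c" "-y"] assms by simp
qed

lemma ode_1D:
  fixes g g' V :: "real \<Rightarrow> real" and n :: nat and r a b :: real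
  assumes n2: "n \<ge> 2" and r: "0 < r" "r < 1"
    and Vc: "continuous_on {0<..<1} V" and Vn: "\<And>x. 0 < x \<Longrightarrow> x < 1 \<Longrightarrow> V x \<ge> 0"
    and gc: "continuous_on {0..1} g"
    and gd: "\<And>x. x \<in> {0..1} - {r} \<Longrightarrow> (g has_real_derivative g' x) (at x within {0..1})"
    and g'd: "\<And>x. x \<in> {0<..<1} - {r} \<Longrightarrow> (g' has_real_derivative (V x * g x - (real n - 1) / x * g' x)) (at x)"
    and g'0: "g' 0 = 0" and g'1: "g' 1 = 0"
    and la: "(g' \<longlongrightarrow> a) (at_left r)" and lb: "(g' \<longlongrightarrow> b) (at_right r)"
  shows "(\<integral>\<^sup>+x. ennreal (indicator {0<..<r} x * (x ^ (n - 1) * ((g' x)\<^sup>2 + V x * (g x)\<^sup>2))) \<partial>lborel)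
           = ennreal (r ^ (n - 1) * g r * a - 0)" "r ^ (n - 1) * g r * a - 0 \<ge> 0"
    and "(\<integral>\<^sup>+x. ennreal (indicator {r<..<1} x * (x ^ (n - 1) * ((g' x)\<^sup>2 + V x * (g x)\<^sup>2))) \<partial>lborel)
           = ennreal (0 - r ^ (n - 1) * g r * b)" "0 - r ^ (n - 1) * g r * b \<ge> 0"
proof -
  define h where "h x = x ^ (n - 1) * ((g' x)\<^sup>2 + V x * (g x)\<^sup>2)" for x
  define \<phi> where "\<phi> x = x ^ (n - 1) * g x * g' x" for x
  have gD: "(g has_real_derivative g' x) (at x)" if "0 < x" "x < 1" "x \<noteq> r" for x
    using gd[of x] that at_within_Icc_at[of 0 x 1] by auto
  have \<phi>D: "(\<phi> has_real_derivative h x) (at x)" if "0 < x" "x < 1" "x \<noteq> r" for x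
    unfolding \<phi>_def h_def using phi_deriv[of n x g g' V] n2 that gD[OF that] g'd[of x] by auto
  have hc: "isCont h x" if "0 < x" "x < 1" "x \<noteq> r" for x
  proof -
    have "isCont g' x" using g'd[of x] that DERIV_isCont by auto
    moreover have "isCont g x" using gD[OF that] DERIV_isCont by auto
    moreover have "isCont V x" using continuous_on_interior[OF Vc, of x] that by auto
    ultimately show ?thesis unfolding h_def by (intro continuous_intros) auto
  qed
  have h0: "h x \<ge> 0" if "0 < x" "x < 1" for x
    unfolding h_def using Vn[OF that] that by auto
  have mono: "\<phi> x \<le> \<phi> y" if "x \<le> y" "\<And>z. x \<le> z \<Longrightarrow> z \<le> y \<Longrightarrow> 0 < z \<and> z < 1 \<and> z \<noteq> r" for x y
    by (rule DERIV_nonneg_imp_nondecreasing[OF that(1)]) (use that \<phi>D h0 in blast)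
  have \<phi>gg: "\<phi> x = x ^ (n - 1) * (g x * g' x)" for x by (simp add: \<phi>_def)
  have p01: "0 < x ^ (n - 1) \<and> x ^ (n - 1) \<le> (1::real)" if "0 < x" "x < 1" for x
    using that by (simp add: power_le_one)
  have qD: "((\<lambda>x. (g x)\<^sup>2 / 2) has_real_derivative g x * g' x) (at x within S)"
    if "(g has_real_derivative g' x) (at x within S)" for x S
    using that by (auto intro!: derivative_eq_intros)
  have qD': "((\<lambda>x. - ((g x)\<^sup>2 / 2)) has_real_derivative - (g x * g' x)) (at x within S)"
    if "(g has_real_derivative g' x) (at x within S)" for x S
    using that by (auto intro!: derivative_eq_intros)
  have gd0: "(g has_real_derivative g' 0) (at 0 within {0..t})" if "0 < t" "t \<le> 1" for t
    using DERIV_subset[OF gd[of 0]] r that by auto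
  have gd1: "(g has_real_derivative g' 1) (at 1 within {t..1})" if "0 \<le> t" "t < 1" for t
    using DERIV_subset[OF gd[of 1]] r that by auto
  have qc: "continuous_on {x..y} (\<lambda>x. (g x)\<^sup>2 / 2)" "continuous_on {x..y} (\<lambda>x. - ((g x)\<^sup>2 / 2))"
    if "0 \<le> x" "y \<le> 1" for x y
    using continuous_on_subset[OF gc, of "{x..y}"] that by (auto intro!: continuous_intros)
  have A0: "(\<phi> \<longlongrightarrow> 0) (at_right 0)"
  proof (rule order_tendstoI)
    fix c :: real assume c: "c < 0"
    have "\<phi> x > c" if x: "0 < x" "x < r" for x
    proof (rule ccontr)
      assume "\<not> \<phi> x > c"
      then have le: "\<phi> z \<le> c" if "0 < z" "z < x" for z
        using mono[of z x] that x r by force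
      show False
      proof (rule endpoint_left[where q="\<lambda>x. - ((g x)\<^sup>2 / 2)" and w="\<lambda>x. - (g x * g' x)" and t=x and e="-c"])
        show "((\<lambda>x. - ((g x)\<^sup>2 / 2)) has_real_derivative 0) (at 0 within {0..x})"
          using qD'[OF gd0[of x]] x r g'0 by simp
        show "- (g z * g' z) \<ge> - c" if "0 < z" "z < x" for z
          using div_le_aux2[OF _ _ c, of "z ^ (n - 1)" "g z * g' z"] p01[of z] le[OF that] that x r
          by (simp add: \<phi>gg)
      qed (use x r c qc qD' gD in auto)
    qed
    then show "eventually (\<lambda>x. c < \<phi> x) (at_right 0)"
      unfolding eventually_at_right_field using r by auto
  next
    fix c :: real assume c: "0 < c"
    have "\<exists>x0. 0 < x0 \<and> x0 < r \<and> \<phi> x0 < c"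
    proof (rule ccontr)
      assume "\<not> ?thesis"
      then have ge: "\<phi> z \<ge> c" if "0 < z" "z < r" for z using that by force
      show False
      proof (rule endpoint_left[where q="\<lambda>x. (g x)\<^sup>2 / 2" and w="\<lambda>x. g x * g' x" and t=r and e="c"])
        show "((\<lambda>x. (g x)\<^sup>2 / 2) has_real_derivative 0) (at 0 within {0..r})"
          using qD[OF gd0[of r]] r g'0 by simp
        show "g z * g' z \<ge> c" if "0 < z" "z < r" for z
          using div_le_aux1[OF _ _ c, of "z ^ (n - 1)" "g z * g' z"] p01[of z] ge[OF that] that r
          by (simp add: \<phi>gg)
      qed (use r c qc qD gD in auto)
    qed
    then obtain x0 where x0: "0 < x0" "x0 < r" "\<phi> x0 < c" by blast
    have "\<phi> y < c" if "0 < y" "y < x0" for y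
      using mono[of y x0] that x0 r by force
    then show "eventually (\<lambda>x. \<phi> x < c) (at_right 0)"
      unfolding eventually_at_right_field using x0 by auto
  qed
  have B1: "(\<phi> \<longlongrightarrow> 0) (at_left 1)"
  proof (rule order_tendstoI)
    fix c :: real assume c: "0 < c"
    have "\<phi> x < c" if x: "r < x" "x < 1" for x
    proof (rule ccontr)
      assume "\<not> \<phi> x < c"
      then have ge: "\<phi> z \<ge> c" if "x < z" "z < 1" for z
        using mono[of x z] that x r by force
      show False
      proof (rule endpoint_right[where q="\<lambda>x. (g x)\<^sup>2 / 2" and w="\<lambda>x. g x * g' x" and t=x and e="c"])
        show "((\<lambda>x. (g x)\<^sup>2 / 2) has_real_derivative 0) (at 1 within {x..1})"
          using qD[OF gd1[of x]] x r g'1 by simp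
        show "g z * g' z \<ge> c" if "x < z" "z < 1" for z
          using div_le_aux1[OF _ _ c, of "z ^ (n - 1)" "g z * g' z"] p01[of z] ge[OF that] that x r
          by (simp add: \<phi>gg)
      qed (use x r c qc qD gD in auto)
    qed
    then show "eventually (\<lambda>x. \<phi> x < c) (at_left 1)"
      unfolding eventually_at_left_field using r by auto
  next
    fix c :: real assume c: "c < 0"
    have "\<exists>x0. r < x0 \<and> x0 < 1 \<and> \<phi> x0 > c"
    proof (rule ccontr)
      assume "\<not> ?thesis"
      then have le: "\<phi> z \<le> c" if "r < z" "z < 1" for z using that by force
      show False
      proof (rule endpoint_right[where q="\<lambda>x. - ((g x)\<^sup>2 / 2)" and w="\<lambda>x. - (g x * g' x)" and t=r and e="-c"])
        show "((\<lambda>x. - ((g x)\<^sup>2 / 2)) has_real_derivative 0) (at 1 within {r..1})"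
          using qD'[OF gd1[of r]] r g'1 by simp
        show "- (g z * g' z) \<ge> - c" if "r < z" "z < 1" for z
          using div_le_aux2[OF _ _ c, of "z ^ (n - 1)" "g z * g' z"] p01[of z] le[OF that] that r
          by (simp add: \<phi>gg)
      qed (use r c qc qD' gD in auto)
    qed
    then obtain x0 where x0: "r < x0" "x0 < 1" "\<phi> x0 > c" by blast
    have "\<phi> y > c" if "x0 < y" "y < 1" for y
      using mono[of x0 y] that x0 r by force
    then show "eventually (\<lambda>x. c < \<phi> x) (at_left 1)"
      unfolding eventually_at_left_field using x0 by auto
  qed
  have gr: "(g \<longlongrightarrow> g r) (at r within S)" for S
  proof -
    have "isCont g r" using continuous_on_interior[OF gc, of r] r by auto
    then show ?thesis unfolding isCont_def by (rule tendsto_mono[OF at_le[OF subset_UNIV]])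
  qed
  have Br: "(\<phi> \<longlongrightarrow> r ^ (n - 1) * g r * a) (at_left r)"
    unfolding \<phi>_def by (intro tendsto_intros gr la)
  have Ar: "(\<phi> \<longlongrightarrow> r ^ (n - 1) * g r * b) (at_right r)"
    unfolding \<phi>_def by (intro tendsto_intros gr lb)
  show "(\<integral>\<^sup>+x. ennreal (indicator {0<..<r} x * (x ^ (n - 1) * ((g' x)\<^sup>2 + V x * (g x)\<^sup>2))) \<partial>lborel)
           = ennreal (r ^ (n - 1) * g r * a - 0)" "r ^ (n - 1) * g r * a - 0 \<ge> 0"
    using FTC_nn[of 0 r \<phi> h 0 "r ^ (n - 1) * g r * a"] r \<phi>D hc h0 A0 Br by (simp_all add: h_def)
  show "(\<integral>\<^sup>+x. ennreal (indicator {r<..<1} x * (x ^ (n - 1) * ((g' x)\<^sup>2 + V x * (g x)\<^sup>2))) \<partial>lborel)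
           = ennreal (0 - r ^ (n - 1) * g r * b)" "0 - r ^ (n - 1) * g r * b \<ge> 0"
    using FTC_nn[of r 1 \<phi> h "r ^ (n - 1) * g r * b" 0] r \<phi>D hc h0 Ar B1 by (simp_all add: h_def)
qed

lemma V_cont:
  fixes V :: "real \<Rightarrow> real"
  assumes "smooth_on (ball (0::'a::euclidean_space) 1) (\<lambda>x. V (norm x))"
  shows "continuous_on {0<..<1} V"
proof -
  obtain D :: "'a list \<Rightarrow> 'a \<Rightarrow> real" where D: "D [] = (\<lambda>x. V (norm x))"
    "\<And>vs x. x \<in> ball 0 1 \<Longrightarrow> (D vs has_derivative (\<lambda>h. \<Sum>b\<in>Basis. (h \<bullet> b) * D (b # vs) x)) (at x)"
    using assms unfolding smooth_on_def by blast
  have "continuous_on (ball 0 1) (\<lambda>x::'a. V (norm x))"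
  proof (rule continuous_at_imp_continuous_on, intro ballI)
    fix x :: 'a assume "x \<in> ball 0 1"
    from D(2)[OF this, of "[]"] D(1) show "isCont (\<lambda>x. V (norm x)) x"
      by (metis has_derivative_continuous)
  qed
  define e :: 'a where "e = (SOME i. i \<in> Basis)"
  have e: "norm e = 1" unfolding e_def by (simp add: SOME_Basis)
  have "continuous_on {0<..<1} ((\<lambda>x::'a. V (norm x)) \<circ> (\<lambda>t. t *\<^sub>R e))"
  proof (rule continuous_on_compose)
    show "continuous_on {0<..<1} (\<lambda>t. t *\<^sub>R e)" by (intro continuous_intros)
    show "continuous_on ((\<lambda>t. t *\<^sub>R e) ` {0<..<1}) (\<lambda>x::'a. V (norm x))"
      by (rule continuous_on_subset[OF \<open>continuous_on (ball 0 1) _\<close>]) (auto simp: e)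
  qed
  then show ?thesis
    by (rule continuous_on_cong[THEN iffD1, rotated 2]) (auto simp: e)
qed

lemma grad_radial:
  fixes x :: "'a::euclidean_space" and g :: "real \<Rightarrow> real"
  assumes x: "x \<noteq> 0" and gD: "(g has_real_derivative D) (at (norm x))"
  shows "norm (grad (\<lambda>y. g (norm y) / c) x) = \<bar>D / c\<bar>"
proof -
  have n: "(norm has_derivative (\<lambda>h. h \<bullet> sgn x)) (at x)"
    using has_derivative_norm[OF x] .
  have g1: "(g has_derivative (\<lambda>h. D * h)) (at (norm x))"
    using gD by (simp add: has_field_derivative_def)
  have d: "((\<lambda>y. g (norm y)) has_derivative (\<lambda>h. D * (h \<bullet> sgn x))) (at x)"
    using has_derivative_compose[OF n g1] .
  have d2: "((\<lambda>y. g (norm y) / c) has_derivative (\<lambda>h. D * (h \<bullet> sgn x) / c)) (at x)"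
    using has_derivative_divide[OF d has_derivative_const, of c] by (cases "c = 0") (auto simp: field_simps)
  have fd: "frechet_derivative (\<lambda>y. g (norm y) / c) (at x) = (\<lambda>h. D * (h \<bullet> sgn x) / c)"
    using frechet_derivative_at[OF d2] by simp
  have "grad (\<lambda>y. g (norm y) / c) x = (\<Sum>b\<in>Basis. (D / c) *\<^sub>R ((sgn x \<bullet> b) *\<^sub>R b))"
    unfolding grad_def fd by (intro sum.cong refl) (simp add: inner_commute)
  also have "\<dots> = (D / c) *\<^sub>R (\<Sum>b\<in>Basis. (sgn x \<bullet> b) *\<^sub>R b)"
    by (rule scaleR_sum_right[symmetric])
  also have "\<dots> = (D / c) *\<^sub>R sgn x"
    by (simp only: euclidean_representation)
  finally show ?thesis using x by (simp add: norm_sgn)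
qed

theorem lemma2p1:
  fixes V :: "real \<Rightarrow> real" and G :: "real \<Rightarrow> real \<Rightarrow> real"
  assumes n2: "CARD('n::finite) \<ge> 2"
    and Vsmooth: "smooth_on (ball (0::real^'n) 1) (\<lambda>x. V (norm x))"
    and Vnonneg: "\<And>r. 0 \<le> r \<Longrightarrow> r < 1 \<Longrightarrow> V r \<ge> 0"
    and Vnonzero: "\<exists>r. 0 \<le> r \<and> r < 1 \<and> V r \<noteq> 0"
    and Green: "\<And>s. 0 < s \<Longrightarrow> s < 1 \<Longrightarrow> radial_green CARD('n) V s (\<lambda>r. G r s)"
    and r: "0 < r" "r < 1"
  shows "Ffun TYPE(real^'n) G r = Qform V (\<lambda>x::real^'n. G (norm x) r / G r r)"
proof -
  define N where "N = CARD('n)"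
  define g where "g = (\<lambda>\<rho>. G \<rho> r)"
  define c where "c = G r r"
  define w where "w = unit_ball_vol (real N)"
  have w0: "w \<ge> 0" by (simp add: w_def)
  have Fval: "Ffun TYPE(real^'n) G r = real N * w * r ^ (N - 1) / c"
    using content_ball[of 1 "0::real^'n"]
    by (simp add: Ffun_def sphere_area_def w_def c_def N_def)
  show ?thesis
  proof (cases "c = 0")
    case True
    then have "(\<lambda>x::real^'n. G (norm x) r / G r r) = (\<lambda>x. 0)" by (simp add: c_def)
    then show ?thesis using Fval True by (simp add: Qform_def grad_def)
  next
    case False
    obtain g' a b where gc: "continuous_on {0..1} g"
      and gd: "\<And>x. x \<in> {0..1} - {r} \<Longrightarrow> (g has_real_derivative g' x) (at x within {0..1})"
      and g'd: "\<And>x. x \<in> {0<..<1} - {r} \<Longrightarrow> (g' has_real_derivative (V x * g x - (real N - 1) / x * g' x)) (at x)"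
      and g'0: "g' 0 = 0" and g'1: "g' 1 = 0"
      and la: "(g' \<longlongrightarrow> a) (at_left r)" and lb: "(g' \<longlongrightarrow> b) (at_right r)" and ab: "a - b = 1"
      using Green[OF r] unfolding radial_green_def g_def N_def by blast
    have Vc: "continuous_on {0<..<1} V" using V_cont[OF Vsmooth] .
    have Vn: "\<And>x. 0 < x \<Longrightarrow> x < 1 \<Longrightarrow> V x \<ge> 0" using Vnonneg by auto
    have N2: "N \<ge> 2" using n2 by (simp add: N_def)
    note I = ode_1D[OF N2 r Vc Vn gc gd g'd g'0 g'1 la lb]
    define s where "s \<rho> = (g' \<rho>)\<^sup>2 + V \<rho> * (g \<rho>)\<^sup>2" for \<rho>
    define h where "h \<rho> = \<rho> ^ (N - 1) * s \<rho>" for \<rho>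
    define S where "S = {0<..<r} \<union> {r<..<1::real}"
    define K where "K \<rho> = indicator S \<rho> * (s \<rho> / c\<^sup>2)" for \<rho>
    have gD: "(g has_real_derivative g' x) (at x)" if "0 < x" "x < 1" "x \<noteq> r" for x
      using gd[of x] that at_within_Icc_at[of 0 x 1] by auto
    have sc: "isCont s x" if "0 < x" "x < 1" "x \<noteq> r" for x
    proof -
      have "isCont g' x" using g'd[of x] that DERIV_isCont by auto
      moreover have "isCont g x" using gD[OF that] DERIV_isCont by auto
      moreover have "isCont V x" using continuous_on_interior[OF Vc, of x] that by auto
      ultimately show ?thesis unfolding s_def by (intro continuous_intros) auto
    qed
    have s0: "s x \<ge> 0" if "0 < x" "x < 1" for x
      unfolding s_def using Vn[OF that] by auto
    have Km[measurable]: "K \<in> borel_measurable borel"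
    proof -
      have "(\<lambda>x. indicator S x *\<^sub>R (s x / c\<^sup>2)) \<in> borel_measurable borel"
        by (rule borel_measurable_continuous_on_indicator)
           (use False r in \<open>auto simp: S_def intro!: continuous_at_imp_continuous_on continuous_intros sc\<close>)
      then show ?thesis by (simp add: K_def[abs_def])
    qed
    have hm: "(\<lambda>x. indicator T x * h x) \<in> borel_measurable borel" if "T \<subseteq> S" "open T" for T
    proof -
      have "(\<lambda>x. indicator T x *\<^sub>R h x) \<in> borel_measurable borel"
        by (rule borel_measurable_continuous_on_indicator)
           (use that r in \<open>auto simp: S_def h_def intro!: continuous_at_imp_continuous_on continuous_intros sc\<close>)
      then show ?thesis by simp
    qed
    have K0: "K x \<ge> 0" for x
      using s0[of x] r by (auto simp: K_def S_def indicator_def)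
    define I0 where "I0 = real N * w * r ^ (N - 1) / c"
    have A1: "(\<integral>\<^sup>+x. ennreal (indicator {0<..<r} x * h x) \<partial>lborel) = ennreal (r ^ (N - 1) * c * a)"
      "r ^ (N - 1) * c * a \<ge> 0"
      using I(1,2) by (simp_all add: h_def s_def g_def c_def)
    have A2: "(\<integral>\<^sup>+x. ennreal (indicator {r<..<1} x * h x) \<partial>lborel) = ennreal (- (r ^ (N - 1) * c * b))"
      "- (r ^ (N - 1) * c * b) \<ge> 0"
      using I(3,4) by (simp_all add: h_def s_def g_def c_def)
    have pw: "indicator {0<..<1} \<rho> * ennreal (real N * w * \<rho> ^ (N - 1)) * ennreal (K \<rho>)
        = ennreal (real N * w / c\<^sup>2) * (ennreal (indicator {0<..<r} \<rho> * h \<rho>) + ennreal (indicator {r<..<1} \<rho> * h \<rho>))"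
      if "\<rho> \<noteq> r" for \<rho>
    proof -
      have eq: "ennreal (real N * w * \<rho> ^ (N - 1)) * ennreal (s \<rho> / c\<^sup>2)
          = ennreal (real N * w / c\<^sup>2) * ennreal (\<rho> ^ (N - 1) * s \<rho>)" if "0 < \<rho>" "\<rho> < 1"
      proof -
        have "ennreal (real N * w * \<rho> ^ (N - 1)) * ennreal (s \<rho> / c\<^sup>2)
           = ennreal (real N * w * \<rho> ^ (N - 1) * (s \<rho> / c\<^sup>2))"
          by (rule ennreal_mult'[symmetric]) (use that w0 in simp)
        also have "\<dots> = ennreal (real N * w / c\<^sup>2 * (\<rho> ^ (N - 1) * s \<rho>))"
          by (rule arg_cong[where f=ennreal]) (simp add: field_simps)
        also have "\<dots> = ennreal (real N * w / c\<^sup>2) * ennreal (\<rho> ^ (N - 1) * s \<rho>)"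
          by (rule ennreal_mult') (use that w0 in simp)
        finally show ?thesis .
      qed
      consider "\<rho> \<in> {0<..<r}" | "\<rho> \<in> {r<..<1}" | "\<rho> \<notin> {0<..<1}" using \<open>\<rho> \<noteq> r\<close> by force
      then show ?thesis
      proof cases
        case 1 then show ?thesis using eq r by (simp add: K_def S_def h_def)
      next
        case 2 then show ?thesis using eq r by (simp add: K_def S_def h_def)
      next
        case 3 then show ?thesis using r by (auto simp: K_def S_def h_def indicator_def)
      qed
    qed
    have "(\<integral>\<^sup>+x. ennreal (indicator (ball (0::real^'n) 1) x * K (norm x)) \<partial>lborel)
        = (\<integral>\<^sup>+x. indicator (ball (0::real^'n) 1) x * ennreal (K (norm x)) \<partial>lborel)"
      by (intro nn_integral_cong) (simp add: indicator_def)
    also have "\<dots> = (\<integral>\<^sup>+\<rho>. indicator {0<..<1} \<rho> * ennreal (real N * w * \<rho> ^ (N - 1)) * ennreal (K \<rho>) \<partial>lborel)"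
      using radial_integral[where F="\<lambda>\<rho>. ennreal (K \<rho>)" and 'a="real^'n"] by (simp add: N_def w_def)
    also have "\<dots> = (\<integral>\<^sup>+\<rho>. ennreal (real N * w / c\<^sup>2) * (ennreal (indicator {0<..<r} \<rho> * h \<rho>) + ennreal (indicator {r<..<1} \<rho> * h \<rho>)) \<partial>lborel)"
      by (rule nn_integral_cong_AE, rule eventually_mono[OF AE_lborel_singleton[of r]], rule pw)
    also have "\<dots> = ennreal (real N * w / c\<^sup>2) * ((\<integral>\<^sup>+\<rho>. ennreal (indicator {0<..<r} \<rho> * h \<rho>) \<partial>lborel) + (\<integral>\<^sup>+\<rho>. ennreal (indicator {r<..<1} \<rho> * h \<rho>) \<partial>lborel))"
      using hm[of "{0<..<r}"] hm[of "{r<..<1}"] by (simp add: nn_integral_cmult nn_integral_add S_def)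
    also have "\<dots> = ennreal (real N * w / c\<^sup>2 * (r ^ (N - 1) * c * a + - (r ^ (N - 1) * c * b)))"
      using A1 A2 w0 by (simp add: ennreal_plus[symmetric] ennreal_mult'[symmetric] del: ennreal_plus)
    also have "real N * w / c\<^sup>2 * (r ^ (N - 1) * c * a + - (r ^ (N - 1) * c * b)) = I0"
      using ab False unfolding I0_def by (simp add: field_simps power2_eq_square)
    finally have NI1: "(\<integral>\<^sup>+x. ennreal (indicator (ball (0::real^'n) 1) x * K (norm x)) \<partial>lborel) = ennreal I0" .
    have "real N * w / c\<^sup>2 * (r ^ (N - 1) * c * a + - (r ^ (N - 1) * c * b)) \<ge> 0"
      using A1(2) A2(2) w0 by simp
    then have "I0 \<ge> 0"
      using ab False unfolding I0_def by (simp add: field_simps power2_eq_square)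
    with NI1 have NI: "(\<integral>\<^sup>+x. ennreal (indicator (ball (0::real^'n) 1) x * K (norm x)) \<partial>lborel) = ennreal I0 \<and> I0 \<ge> 0"
      by simp
    have bm[measurable]: "ball (0::real^'n) 1 \<in> sets borel" by simp
    have fm: "(\<lambda>x. indicator (ball (0::real^'n) 1) x * K (norm x)) \<in> borel_measurable borel"
      by measurable
    have HI: "((\<lambda>x. indicator (ball (0::real^'n) 1) x * K (norm x)) has_integral I0) UNIV"
    proof (rule nn_integral_has_integral[OF fm])
      show "0 \<le> indicator (ball (0::real^'n) 1) x * K (norm x)" for x
        using K0[of "norm x"] by (simp add: indicator_def)
    qed (use NI in auto)
    have eqf: "(\<lambda>x. if x \<in> ball (0::real^'n) 1 then K (norm x) else 0) = (\<lambda>x. indicator (ball (0::real^'n) 1) x * K (norm x))"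
      by (auto simp: indicator_def fun_eq_iff)
    have HI2: "((\<lambda>x. K (norm x)) has_integral I0) (ball (0::real^'n) 1)"
      using HI unfolding eqf[symmetric] has_integral_restrict_UNIV .
    have HI3: "((\<lambda>x. (norm (grad (\<lambda>x::real^'n. G (norm x) r / G r r) x))\<^sup>2 + V (norm x) * (G (norm x) r / G r r)\<^sup>2) has_integral I0) (ball (0::real^'n) 1)"
    proof (rule has_integral_spike[OF _ _ HI2])
      show "negligible ({0} \<union> sphere (0::real^'n) r)" using negligible_sphere by auto
      fix x :: "real^'n" assume x: "x \<in> ball 0 1 - ({0} \<union> sphere 0 r)"
      then have x0: "x \<noteq> 0" "0 < norm x" "norm x < 1" "norm x \<noteq> r" by auto
      have "norm (grad (\<lambda>y::real^'n. g (norm y) / c) x) = \<bar>g' (norm x) / c\<bar>"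
        by (rule grad_radial[OF x0(1) gD[OF x0(2-4)]])
      then have ng: "norm (grad (\<lambda>x::real^'n. G (norm x) r / G r r) x) = \<bar>g' (norm x) / c\<bar>"
        by (simp add: g_def c_def)
      show "(norm (grad (\<lambda>x::real^'n. G (norm x) r / G r r) x))\<^sup>2 + V (norm x) * (G (norm x) r / G r r)\<^sup>2 = K (norm x)"
      proof -
        have ind: "indicator S (norm x) = (1::real)" using x0 by (auto simp: S_def indicator_def)
        show ?thesis using ng by (simp add: K_def ind s_def g_def c_def power_divide add_divide_distrib)
      qed
    qed
    have "Qform V (\<lambda>x::real^'n. G (norm x) r / G r r) = I0"
      unfolding Qform_def using HI3 by (rule integral_unique)
    then show ?thesis using Fval by (simp add: I0_def)
  qed
qed

end
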